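(* Let $(\mathcal P,\cdot,[-,\dots,-])$ be a Poisson $n$-Lie algebra and let $\widetilde{\mathcal P}=\otimes^{n-1}\mathcal P$ be equipped with the componentwise product $(x_1\otimes\cdots\otimes x_{n-1})\cdot(y_1\otimes\cdots\otimes y_{n-1})=x_1y_1\otimes\cdots\otimes x_{n-1}y_{n-1}$ and with the bilinear bracket defined on pure tensors $x=x_1\otimes\cdots\otimes x_{n-1}$, $y=y_1\otimes\cdots\otimes y_{n-1}$ by $$[x,y]_\otimes=\sum_{i=1}^{n-1}y_1\otimes\cdots\otimes[x_1,\dots,x_{n-1},y_i]\otimes\cdots\otimes y_{n-1}.$$ Let $\mathcal J$ be the ideal of $\widetilde{\mathcal P}$ with respect to both operations $\cdot$ and $[-,-]_\otimes$ generated by all elements $[x,y]_\otimes+[y,x]_\otimes$, $x,y\in\otimes^{n-1}\mathcal P$. Then $(\widetilde{\mathcal P}/\mathcal J,\cdot,[-,-]_\otimes)$ with the induced operations is a Poisson algebra.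
   Context: A Poisson $n$-Lie algebra is a commutative associative algebra $(\mathcal P,\cdot)$ with an $n$-linear skew-symmetric bracket satisfying the fundamental identity $[x_1,\dots,x_{n-1},[y_1,\dots,y_n]]=\sum_{i=1}^n[y_1,\dots,[x_1,\dots,x_{n-1},y_i],\dots,y_n]$ and the Leibniz rule $[y\cdot z,x_2,\dots,x_n]=y\cdot[z,x_2,\dots,x_n]+z\cdot[y,x_2,\dots,x_n]$. A Poisson algebra is a commutative associative algebra with a Lie bracket $[-,-]$ satisfying $[x,y\cdot z]=[x,y]\cdot z+y\cdot[x,z]$. *)

theory Defs
  imports Main "HOL-Library.Poly_Mapping"
begin

definition multilinear_list :: "('k::field \<Rightarrow> 'p::ab_group_add \<Rightarrow> 'p) \<Rightarrow> nat \<Rightarrow> ('p list \<Rightarrow> 'p) \<Rightarrow> bool" where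
  "multilinear_list smul n br \<longleftrightarrow>
     (\<forall>xs i u v. length xs = n \<longrightarrow> i < n \<longrightarrow> br (xs[i := u + v]) = br (xs[i := u]) + br (xs[i := v])) \<and>
     (\<forall>xs i c u. length xs = n \<longrightarrow> i < n \<longrightarrow> br (xs[i := smul c u]) = smul c (br (xs[i := u])))"

definition skew_list :: "nat \<Rightarrow> ('p::ab_group_add list \<Rightarrow> 'p) \<Rightarrow> bool" where
  "skew_list n br \<longleftrightarrow>
     (\<forall>xs i j. length xs = n \<longrightarrow> i < n \<longrightarrow> j < n \<longrightarrow> i \<noteq> j \<longrightarrow>
        br (xs[i := xs ! j, j := xs ! i]) = - br xs)"

definition poisson_nlie :: "('k::field \<Rightarrow> 'p::ab_group_add \<Rightarrow> 'p) \<Rightarrow> ('p \<Rightarrow> 'p \<Rightarrow> 'p) \<Rightarrow> nat \<Rightarrow> ('p list \<Rightarrow> 'p) \<Rightarrow> bool" where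
  "poisson_nlie smul mul n br \<longleftrightarrow>
     \<comment> \<open>k-vector space axioms for smul\<close>
     (\<forall>a x y. smul a (x + y) = smul a x + smul a y) \<and>
     (\<forall>a b x. smul (a + b) x = smul a x + smul b x) \<and>
     (\<forall>a b x. smul a (smul b x) = smul (a * b) x) \<and>
     (\<forall>x. smul 1 x = x) \<and>
     (\<forall>x y z. mul (x + y) z = mul x z + mul y z) \<and>
     (\<forall>c x y. mul (smul c x) y = smul c (mul x y)) \<and>
     (\<forall>x y. mul x y = mul y x) \<and>
     (\<forall>x y z. mul (mul x y) z = mul x (mul y z)) \<and>
     multilinear_list smul n br \<and>
     skew_list n br \<and>
     \<comment> \<open>fundamental identity\<close>
     (\<forall>xs ys. length xs = n - 1 \<longrightarrow> length ys = n \<longrightarrow>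
        br (xs @ [br ys]) = (\<Sum>i<n. br (ys[i := br (xs @ [ys ! i])]))) \<and>
     \<comment> \<open>Leibniz rule in the first argument\<close>
     (\<forall>y z xs. length xs = n - 1 \<longrightarrow>
        br (mul y z # xs) = mul y (br (z # xs)) + mul z (br (y # xs)))"

definition poisson_algebra_on ::
  "'a set \<Rightarrow> 'a \<Rightarrow> ('a \<Rightarrow> 'a \<Rightarrow> 'a) \<Rightarrow> ('a \<Rightarrow> 'a) \<Rightarrow> ('k::field \<Rightarrow> 'a \<Rightarrow> 'a)
    \<Rightarrow> ('a \<Rightarrow> 'a \<Rightarrow> 'a) \<Rightarrow> ('a \<Rightarrow> 'a \<Rightarrow> 'a) \<Rightarrow> bool" where
  "poisson_algebra_on A z add neg sc mul br \<longleftrightarrow>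
     \<comment> \<open>vector space over 'k\<close>
     z \<in> A \<and>
     (\<forall>x\<in>A. \<forall>y\<in>A. add x y \<in> A) \<and> (\<forall>x\<in>A. neg x \<in> A) \<and> (\<forall>c. \<forall>x\<in>A. sc c x \<in> A) \<and>
     (\<forall>x\<in>A. \<forall>y\<in>A. \<forall>w\<in>A. add (add x y) w = add x (add y w)) \<and>
     (\<forall>x\<in>A. \<forall>y\<in>A. add x y = add y x) \<and>
     (\<forall>x\<in>A. add z x = x) \<and> (\<forall>x\<in>A. add (neg x) x = z) \<and>
     (\<forall>a b. \<forall>x\<in>A. sc (a + b) x = add (sc a x) (sc b x)) \<and>
     (\<forall>a. \<forall>x\<in>A. \<forall>y\<in>A. sc a (add x y) = add (sc a x) (sc a y)) \<and>
     (\<forall>a b. \<forall>x\<in>A. sc a (sc b x) = sc (a * b) x) \<and>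
     (\<forall>x\<in>A. sc 1 x = x) \<and>
     \<comment> \<open>commutative associative algebra (bilinear product)\<close>
     (\<forall>x\<in>A. \<forall>y\<in>A. mul x y \<in> A) \<and>
     (\<forall>x\<in>A. \<forall>y\<in>A. \<forall>w\<in>A. mul (add x y) w = add (mul x w) (mul y w)) \<and>
     (\<forall>c. \<forall>x\<in>A. \<forall>y\<in>A. mul (sc c x) y = sc c (mul x y)) \<and>
     (\<forall>x\<in>A. \<forall>y\<in>A. mul x y = mul y x) \<and>
     (\<forall>x\<in>A. \<forall>y\<in>A. \<forall>w\<in>A. mul (mul x y) w = mul x (mul y w)) \<and>
     \<comment> \<open>Lie algebra (bilinear, skew-symmetric, Jacobi)\<close>
     (\<forall>x\<in>A. \<forall>y\<in>A. br x y \<in> A) \<and>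
     (\<forall>x\<in>A. \<forall>y\<in>A. \<forall>w\<in>A. br (add x y) w = add (br x w) (br y w)) \<and>
     (\<forall>c. \<forall>x\<in>A. \<forall>y\<in>A. br (sc c x) y = sc c (br x y)) \<and>
     (\<forall>x\<in>A. \<forall>y\<in>A. br x y = neg (br y x)) \<and>
     (\<forall>x\<in>A. \<forall>y\<in>A. \<forall>w\<in>A. add (br x (br y w)) (add (br y (br w x)) (br w (br x y))) = z) \<and>
     \<comment> \<open>Leibniz rule\<close>
     (\<forall>x\<in>A. \<forall>y\<in>A. \<forall>w\<in>A. br x (mul y w) = add (mul (br x y) w) (mul y (br x w)))"

section \<open>The tensor power \<open>\<otimes>\<^sup>m P\<close> as a quotient of the free vector space on m-tuples\<close>

text \<open>Formal 'k-linear combinations of lists of elements of P; the basis element of the list xs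
  stands for the pure tensor of its entries.\<close>

definition fsc :: "'k::field \<Rightarrow> ('p \<Rightarrow>\<^sub>0 'k) \<Rightarrow> ('p \<Rightarrow>\<^sub>0 'k)" where
  "fsc c F = Poly_Mapping.map (\<lambda>a. c * a) F"

definition bas :: "'p list \<Rightarrow> ('p list \<Rightarrow>\<^sub>0 'k::field)" where
  "bas xs = Poly_Mapping.single xs 1"

definition free_tensors :: "nat \<Rightarrow> ('p list \<Rightarrow>\<^sub>0 'k::field) set" where
  "free_tensors m = {F. \<forall>xs\<in>Poly_Mapping.keys F. length xs = m}"

definition bilin_ext :: "('p list \<Rightarrow> 'p list \<Rightarrow> ('p list \<Rightarrow>\<^sub>0 'k::field))
    \<Rightarrow> ('p list \<Rightarrow>\<^sub>0 'k) \<Rightarrow> ('p list \<Rightarrow>\<^sub>0 'k) \<Rightarrow> ('p list \<Rightarrow>\<^sub>0 'k)" where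
  "bilin_ext f F G = (\<Sum>a\<in>Poly_Mapping.keys F. \<Sum>b\<in>Poly_Mapping.keys G. fsc (Poly_Mapping.lookup F a * Poly_Mapping.lookup G b) (f a b))"

definition tprod :: "('p \<Rightarrow> 'p \<Rightarrow> 'p) \<Rightarrow> ('p list \<Rightarrow>\<^sub>0 'k::field) \<Rightarrow> ('p list \<Rightarrow>\<^sub>0 'k) \<Rightarrow> ('p list \<Rightarrow>\<^sub>0 'k)" where
  "tprod mul = bilin_ext (\<lambda>xs ys. bas (map2 mul xs ys))"

definition tbr :: "nat \<Rightarrow> ('p list \<Rightarrow> 'p) \<Rightarrow> ('p list \<Rightarrow>\<^sub>0 'k::field) \<Rightarrow> ('p list \<Rightarrow>\<^sub>0 'k) \<Rightarrow> ('p list \<Rightarrow>\<^sub>0 'k)" where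
  "tbr n br = bilin_ext (\<lambda>xs ys. \<Sum>i<n - 1. bas (ys[i := br (xs @ [ys ! i])]))"

text \<open>Multilinearity relations; the tensor power is the free space modulo their span.\<close>
definition tensor_relations :: "('k::field \<Rightarrow> 'p::ab_group_add \<Rightarrow> 'p) \<Rightarrow> nat \<Rightarrow> ('p list \<Rightarrow>\<^sub>0 'k) set" where
  "tensor_relations smul m =
     {bas (xs[i := u + v]) - bas (xs[i := u]) - bas (xs[i := v]) | xs i u v. length xs = m \<and> i < m} \<union>
     {bas (xs[i := smul c u]) - fsc c (bas (xs[i := u])) | xs i c u. length xs = m \<and> i < m}"

definition two_op_ideal :: "('p list \<Rightarrow>\<^sub>0 'k::field) set \<Rightarrow> ('p list \<Rightarrow>\<^sub>0 'k) set
     \<Rightarrow> (('p list \<Rightarrow>\<^sub>0 'k) \<Rightarrow> ('p list \<Rightarrow>\<^sub>0 'k) \<Rightarrow> ('p list \<Rightarrow>\<^sub>0 'k))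
     \<Rightarrow> (('p list \<Rightarrow>\<^sub>0 'k) \<Rightarrow> ('p list \<Rightarrow>\<^sub>0 'k) \<Rightarrow> ('p list \<Rightarrow>\<^sub>0 'k)) \<Rightarrow> bool" where
  "two_op_ideal A S mul br \<longleftrightarrow> S \<subseteq> A \<and> 0 \<in> S \<and>
     (\<forall>x\<in>S. \<forall>y\<in>S. x + y \<in> S) \<and> (\<forall>c. \<forall>x\<in>S. fsc c x \<in> S) \<and>
     (\<forall>a\<in>A. \<forall>x\<in>S. mul a x \<in> S \<and> mul x a \<in> S \<and> br a x \<in> S \<and> br x a \<in> S)"

definition generated_ideal :: "('p list \<Rightarrow>\<^sub>0 'k::field) set \<Rightarrow> ('p list \<Rightarrow>\<^sub>0 'k) set
     \<Rightarrow> (('p list \<Rightarrow>\<^sub>0 'k) \<Rightarrow> ('p list \<Rightarrow>\<^sub>0 'k) \<Rightarrow> ('p list \<Rightarrow>\<^sub>0 'k))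
     \<Rightarrow> (('p list \<Rightarrow>\<^sub>0 'k) \<Rightarrow> ('p list \<Rightarrow>\<^sub>0 'k) \<Rightarrow> ('p list \<Rightarrow>\<^sub>0 'k)) \<Rightarrow> ('p list \<Rightarrow>\<^sub>0 'k) set" where
  "generated_ideal A G mul br = \<Inter>{S. two_op_ideal A S mul br \<and> G \<subseteq> S}"

text \<open>The preimage in the free space of the ideal J of the tensor power: the ideal generated by
  the multilinearity relations together with all [x,y] + [y,x].\<close>
definition J_ideal :: "('k::field \<Rightarrow> 'p::ab_group_add \<Rightarrow> 'p) \<Rightarrow> ('p \<Rightarrow> 'p \<Rightarrow> 'p) \<Rightarrow> nat \<Rightarrow> ('p list \<Rightarrow> 'p)
     \<Rightarrow> ('p list \<Rightarrow>\<^sub>0 'k) set" where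
  "J_ideal smul mul n br =
     generated_ideal (free_tensors (n - 1))
       (tensor_relations smul (n - 1) \<union>
        {tbr n br x y + tbr n br y x | x y. x \<in> free_tensors (n - 1) \<and> y \<in> free_tensors (n - 1)})
       (tprod mul) (tbr n br)"

definition coset :: "('p list \<Rightarrow>\<^sub>0 'k::field) set \<Rightarrow> ('p list \<Rightarrow>\<^sub>0 'k) \<Rightarrow> ('p list \<Rightarrow>\<^sub>0 'k) set" where
  "coset I x = {x + j | j. j \<in> I}"

definition quot :: "('p list \<Rightarrow>\<^sub>0 'k::field) set \<Rightarrow> ('p list \<Rightarrow>\<^sub>0 'k) set \<Rightarrow> ('p list \<Rightarrow>\<^sub>0 'k) set set" where
  "quot A I = coset I ` A"

definition rep :: "('p list \<Rightarrow>\<^sub>0 'k::field) set \<Rightarrow> ('p list \<Rightarrow>\<^sub>0 'k)" where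
  "rep X = (SOME x. x \<in> X)"

definition qop2 :: "('p list \<Rightarrow>\<^sub>0 'k::field) set \<Rightarrow> (('p list \<Rightarrow>\<^sub>0 'k) \<Rightarrow> ('p list \<Rightarrow>\<^sub>0 'k) \<Rightarrow> ('p list \<Rightarrow>\<^sub>0 'k))
     \<Rightarrow> ('p list \<Rightarrow>\<^sub>0 'k) set \<Rightarrow> ('p list \<Rightarrow>\<^sub>0 'k) set \<Rightarrow> ('p list \<Rightarrow>\<^sub>0 'k) set" where
  "qop2 I f X Y = coset I (f (rep X) (rep Y))"

definition qneg :: "('p list \<Rightarrow>\<^sub>0 'k::field) set \<Rightarrow> ('p list \<Rightarrow>\<^sub>0 'k) set \<Rightarrow> ('p list \<Rightarrow>\<^sub>0 'k) set" where
  "qneg I X = coset I (- rep X)"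

definition qsc :: "('p list \<Rightarrow>\<^sub>0 'k::field) set \<Rightarrow> 'k \<Rightarrow> ('p list \<Rightarrow>\<^sub>0 'k) set \<Rightarrow> ('p list \<Rightarrow>\<^sub>0 'k) set" where
  "qsc I c X = coset I (fsc c (rep X))"

end

theory Submission
  imports Defs
begin


lemma lookup_fsc [simp]: "Poly_Mapping.lookup (fsc c F) k = c * Poly_Mapping.lookup F k"
  unfolding fsc_def by (simp add: Poly_Mapping.map.rep_eq when_def)

lemma fsc_add [simp]: "fsc c (F + G) = fsc c F + fsc c G"
  by (rule poly_mapping_eqI) (simp add: lookup_add algebra_simps)
lemma fsc_add_scalar: "fsc (a + b) F = fsc a F + fsc b F"
  by (rule poly_mapping_eqI) (simp add: lookup_add algebra_simps)
lemma fsc_fsc [simp]: "fsc a (fsc b F) = fsc (a * b) F"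
  by (rule poly_mapping_eqI) (simp add: algebra_simps)
lemma fsc_one [simp]: "fsc 1 F = F"
  by (rule poly_mapping_eqI) simp
lemma fsc_zero [simp]: "fsc 0 F = 0"
  by (rule poly_mapping_eqI) simp
lemma fsc_zero2 [simp]: "fsc c 0 = 0"
  by (rule poly_mapping_eqI) simp
lemma fsc_uminus [simp]: "fsc c (- F) = - fsc c F"
  by (rule poly_mapping_eqI) (simp add: lookup_minus)
lemma fsc_diff [simp]: "fsc c (F - G) = fsc c F - fsc c G"
  by (rule poly_mapping_eqI) (simp add: lookup_minus algebra_simps)
lemma fsc_neg1: "fsc (-1) F = - F"
  by (rule poly_mapping_eqI) simp
lemma fsc_sum: "fsc c (sum f S) = (\<Sum>i\<in>S. fsc c (f i))"
  by (induction S rule: infinite_finite_induct) auto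
lemma keys_fsc: "Poly_Mapping.keys (fsc c F) \<subseteq> Poly_Mapping.keys F"
  by (auto simp: in_keys_iff)
lemma fsc_bas: "fsc c (bas xs) = Poly_Mapping.single xs c"
  unfolding fsc_def bas_def by simp

lemma pm_expansion: "F = (\<Sum>a\<in>Poly_Mapping.keys F. fsc (Poly_Mapping.lookup F a) (bas a))"
proof -
  have *: "finite I \<Longrightarrow> Poly_Mapping.lookup (\<Sum>i\<in>I. fsc (Poly_Mapping.lookup F i) (bas i)) j =
            (if j \<in> I then Poly_Mapping.lookup F j else 0)" for I j
    by (induction I rule: finite_induct) (auto simp: fsc_bas lookup_single lookup_add when_def)
  show ?thesis
    by (rule poly_mapping_eqI) (fastforce simp add: in_keys_iff *)
qed

lemma bilin_ext_super:
  assumes "finite S" "Poly_Mapping.keys F \<subseteq> S" "finite T" "Poly_Mapping.keys G \<subseteq> T"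
  shows "bilin_ext f F G = (\<Sum>a\<in>S. \<Sum>b\<in>T. fsc (Poly_Mapping.lookup F a * Poly_Mapping.lookup G b) (f a b))"
proof -
  have "bilin_ext f F G = (\<Sum>a\<in>S. \<Sum>b\<in>Poly_Mapping.keys G. fsc (Poly_Mapping.lookup F a * Poly_Mapping.lookup G b) (f a b))"
    unfolding bilin_ext_def
    by (rule sum.mono_neutral_left) (use assms in \<open>auto simp: in_keys_iff\<close>)
  also have "\<dots> = (\<Sum>a\<in>S. \<Sum>b\<in>T. fsc (Poly_Mapping.lookup F a * Poly_Mapping.lookup G b) (f a b))"
    by (rule sum.cong[OF refl], rule sum.mono_neutral_left) (use assms in \<open>auto simp: in_keys_iff\<close>)
  finally show ?thesis .
qed

lemma bilin_ext_addL: "bilin_ext f (F + G) H = bilin_ext f F H + bilin_ext f G H"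
proof -
  let ?S = "Poly_Mapping.keys F \<union> Poly_Mapping.keys G" and ?T = "Poly_Mapping.keys H"
  have "bilin_ext f (F + G) H = (\<Sum>a\<in>?S. \<Sum>b\<in>?T. fsc (Poly_Mapping.lookup (F+G) a * Poly_Mapping.lookup H b) (f a b))"
    by (rule bilin_ext_super) (auto simp: keys_add)
  also have "\<dots> = (\<Sum>a\<in>?S. \<Sum>b\<in>?T. fsc (Poly_Mapping.lookup F a * Poly_Mapping.lookup H b) (f a b))
     + (\<Sum>a\<in>?S. \<Sum>b\<in>?T. fsc (Poly_Mapping.lookup G a * Poly_Mapping.lookup H b) (f a b))"
    by (simp add: lookup_add distrib_right fsc_add_scalar sum.distrib)
  also have "\<dots> = bilin_ext f F H + bilin_ext f G H"
    by (subst (1 2) bilin_ext_super[of ?S _ ?T]) auto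
  finally show ?thesis .
qed


lemma bilin_ext_addR: "bilin_ext f H (F + G) = bilin_ext f H F + bilin_ext f H G"
proof -
  let ?S = "Poly_Mapping.keys F \<union> Poly_Mapping.keys G" and ?T = "Poly_Mapping.keys H"
  have "bilin_ext f H (F + G) = (\<Sum>b\<in>?T. \<Sum>a\<in>?S. fsc (Poly_Mapping.lookup H b * Poly_Mapping.lookup (F+G) a) (f b a))"
    by (rule bilin_ext_super) (auto simp: keys_add)
  also have "\<dots> = (\<Sum>b\<in>?T. \<Sum>a\<in>?S. fsc (Poly_Mapping.lookup H b * Poly_Mapping.lookup F a) (f b a))
     + (\<Sum>b\<in>?T. \<Sum>a\<in>?S. fsc (Poly_Mapping.lookup H b * Poly_Mapping.lookup G a) (f b a))"
    by (simp add: lookup_add distrib_left fsc_add_scalar sum.distrib)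
  also have "\<dots> = bilin_ext f H F + bilin_ext f H G"
    by (subst (1 2) bilin_ext_super[of ?T _ ?S]) auto
  finally show ?thesis .
qed

lemma bilin_ext_fscL: "bilin_ext f (fsc c F) H = fsc c (bilin_ext f F H)"
proof -
  have "bilin_ext f (fsc c F) H = (\<Sum>a\<in>Poly_Mapping.keys F. \<Sum>b\<in>Poly_Mapping.keys H. fsc (Poly_Mapping.lookup (fsc c F) a * Poly_Mapping.lookup H b) (f a b))"
    by (rule bilin_ext_super) (auto simp: keys_fsc)
  also have "\<dots> = fsc c (bilin_ext f F H)"
    by (simp add: bilin_ext_def fsc_sum mult.assoc)
  finally show ?thesis .
qed


lemma bilin_ext_fscR: "bilin_ext f H (fsc c F) = fsc c (bilin_ext f H F)"
proof -
  have "bilin_ext f H (fsc c F) = (\<Sum>b\<in>Poly_Mapping.keys H. \<Sum>a\<in>Poly_Mapping.keys F. fsc (Poly_Mapping.lookup H b * Poly_Mapping.lookup (fsc c F) a) (f b a))"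
    by (rule bilin_ext_super) (auto simp: keys_fsc)
  also have "\<dots> = fsc c (bilin_ext f H F)"
    by (simp add: bilin_ext_def fsc_sum mult.left_commute)
  finally show ?thesis .
qed


lemma bilin_ext_zeroL [simp]: "bilin_ext f 0 H = 0"
  by (simp add: bilin_ext_def)
lemma bilin_ext_zeroR [simp]: "bilin_ext f H 0 = 0"
  by (simp add: bilin_ext_def)
lemma bilin_ext_negL: "bilin_ext f (- F) H = - bilin_ext f F H"
  using bilin_ext_fscL[of f "-1" F H] by (simp add: fsc_neg1)
lemma bilin_ext_negR: "bilin_ext f H (- F) = - bilin_ext f H F"
  using bilin_ext_fscR[of f H "-1" F] by (simp add: fsc_neg1)
lemma bilin_ext_diffL: "bilin_ext f (F - G) H = bilin_ext f F H - bilin_ext f G H"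
  by (simp only: diff_conv_add_uminus bilin_ext_addL bilin_ext_negL)
lemma bilin_ext_diffR: "bilin_ext f H (F - G) = bilin_ext f H F - bilin_ext f H G"
  by (simp only: diff_conv_add_uminus bilin_ext_addR bilin_ext_negR)

lemma bilin_ext_sumL: "bilin_ext f (sum g S) H = (\<Sum>i\<in>S. bilin_ext f (g i) H)"
  by (induction S rule: infinite_finite_induct) (auto simp: bilin_ext_addL)
lemma bilin_ext_sumR: "bilin_ext f H (sum g S) = (\<Sum>i\<in>S. bilin_ext f H (g i))"
  by (induction S rule: infinite_finite_induct) (auto simp: bilin_ext_addR)
lemma bilin_ext_bas [simp]: "bilin_ext f (bas a) (bas b) = f a b"
  by (simp add: bilin_ext_def bas_def)



lemma ft_zero [simp]: "0 \<in> free_tensors m"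
  by (simp add: free_tensors_def)
lemma ft_add [simp]: "F \<in> free_tensors m \<Longrightarrow> G \<in> free_tensors m \<Longrightarrow> F + G \<in> free_tensors m"
  unfolding free_tensors_def using keys_add[of F G] by auto
lemma ft_fsc [simp]: "F \<in> free_tensors m \<Longrightarrow> fsc c F \<in> free_tensors m"
  unfolding free_tensors_def using keys_fsc[of c F] by auto
lemma ft_uminus [simp]: "F \<in> free_tensors m \<Longrightarrow> - F \<in> free_tensors m"
  using ft_fsc[of F m "-1"] by (simp add: fsc_neg1)
lemma ft_diff [simp]: "F \<in> free_tensors m \<Longrightarrow> G \<in> free_tensors m \<Longrightarrow> F - G \<in> free_tensors m"
  unfolding diff_conv_add_uminus by (intro ft_add ft_uminus)
lemma ft_sum: "(\<And>i. i \<in> S \<Longrightarrow> f i \<in> free_tensors m) \<Longrightarrow> sum f S \<in> free_tensors m"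
  by (induction S rule: infinite_finite_induct) auto
lemma ft_bas [simp]: "length xs = m \<Longrightarrow> bas xs \<in> free_tensors m"
  by (simp add: free_tensors_def bas_def)
lemma ft_bilin:
  assumes "F \<in> free_tensors m" "G \<in> free_tensors m"
    "\<And>a b. length a = m \<Longrightarrow> length b = m \<Longrightarrow> f a b \<in> free_tensors m"
  shows "bilin_ext f F G \<in> free_tensors m"
  unfolding bilin_ext_def using assms
  by (intro ft_sum ft_fsc assms(3)) (auto simp: free_tensors_def)

lemma ft_induct:
  assumes "F \<in> free_tensors m" "P 0" "\<And>a. length a = m \<Longrightarrow> P (bas a)"
    "\<And>x y. P x \<Longrightarrow> P y \<Longrightarrow> P (x + y)" "\<And>c x. P x \<Longrightarrow> P (fsc c x)"
  shows "P F"
proof -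
  have "finite S \<Longrightarrow> S \<subseteq> Poly_Mapping.keys F \<Longrightarrow> P (\<Sum>a\<in>S. fsc (Poly_Mapping.lookup F a) (bas a))" for S
  proof (induction S rule: finite_induct)
    case empty then show ?case using assms(2) by simp
  next
    case (insert a S)
    have "length a = m" using insert assms(1) by (auto simp: free_tensors_def)
    then show ?case using insert assms by simp
  qed
  then show ?thesis by (metis finite_keys order_refl pm_expansion)
qed


lemma bi_induct:
  fixes E :: "('p list \<Rightarrow>\<^sub>0 'k::field) \<Rightarrow> ('p list \<Rightarrow>\<^sub>0 'k) \<Rightarrow> ('p list \<Rightarrow>\<^sub>0 'k)"
  assumes J: "0 \<in> J" "\<And>a b. a\<in>J \<Longrightarrow> b\<in>J \<Longrightarrow> a+b\<in>J" "\<And>c a. a\<in>J \<Longrightarrow> fsc c a \<in> J"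
    and L1: "\<And>x1 x2 y. E (x1+x2) y = E x1 y + E x2 y" "\<And>c x y. E (fsc c x) y = fsc c (E x y)"
    and L2: "\<And>x y1 y2. E x (y1+y2) = E x y1 + E x y2" "\<And>c x y. E x (fsc c y) = fsc c (E x y)"
    and base: "\<And>a b. length a = m \<Longrightarrow> length b = m \<Longrightarrow> E (bas a) (bas b) \<in> J"
    and x: "x \<in> free_tensors m" and y: "y \<in> free_tensors m"
  shows "E x y \<in> J"
proof -
  have Z1: "E 0 y = 0" for y using L1(2)[of 0 0 y] by simp
  have Z2: "E x 0 = 0" for x using L2(2)[of x 0 0] by simp
  have "\<forall>y\<in>free_tensors m. E x y \<in> J"
  proof (rule ft_induct[OF x, where P="\<lambda>x. \<forall>y\<in>free_tensors m. E x y \<in> J"])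
    show "\<forall>y\<in>free_tensors m. E 0 y \<in> J" using Z1 J by simp
  next
    fix a :: "'p list" assume a: "length a = m"
    show "\<forall>y\<in>free_tensors m. E (bas a) y \<in> J"
    proof
      fix y :: "'p list \<Rightarrow>\<^sub>0 'k" assume "y \<in> free_tensors m"
      then show "E (bas a) y \<in> J"
        by (rule ft_induct[where P="\<lambda>y. E (bas a) y \<in> J"]) (use Z2 J L2 base a in auto)
    qed
  qed (use J L1 in auto)
  then show ?thesis using y by blast
qed


lemma tri_induct:
  fixes E :: "('p list \<Rightarrow>\<^sub>0 'k::field) \<Rightarrow> ('p list \<Rightarrow>\<^sub>0 'k) \<Rightarrow> ('p list \<Rightarrow>\<^sub>0 'k) \<Rightarrow> ('p list \<Rightarrow>\<^sub>0 'k)"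
  assumes J: "0 \<in> J" "\<And>a b. a\<in>J \<Longrightarrow> b\<in>J \<Longrightarrow> a+b\<in>J" "\<And>c a. a\<in>J \<Longrightarrow> fsc c a \<in> J"
    and L1: "\<And>x1 x2 y w. E (x1+x2) y w = E x1 y w + E x2 y w" "\<And>c x y w. E (fsc c x) y w = fsc c (E x y w)"
    and L2: "\<And>x y1 y2 w. E x (y1+y2) w = E x y1 w + E x y2 w" "\<And>c x y w. E x (fsc c y) w = fsc c (E x y w)"
    and L3: "\<And>x y w1 w2. E x y (w1+w2) = E x y w1 + E x y w2" "\<And>c x y w. E x y (fsc c w) = fsc c (E x y w)"
    and base: "\<And>a b d. length a = m \<Longrightarrow> length b = m \<Longrightarrow> length d = m \<Longrightarrow> E (bas a) (bas b) (bas d) \<in> J"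
    and x: "x \<in> free_tensors m" and y: "y \<in> free_tensors m" and w: "w \<in> free_tensors m"
  shows "E x y w \<in> J"
proof -
  have Z1: "E 0 y w = 0" for y w using L1(2)[of 0 0 y w] by simp
  have "\<forall>y\<in>free_tensors m. \<forall>w\<in>free_tensors m. E x y w \<in> J"
  proof (rule ft_induct[OF x, where P="\<lambda>x. \<forall>y\<in>free_tensors m. \<forall>w\<in>free_tensors m. E x y w \<in> J"])
    show "\<forall>y\<in>free_tensors m. \<forall>w\<in>free_tensors m. E 0 y w \<in> J" using Z1 J by simp
  next
    fix a :: "'p list" assume a: "length a = m"
    show "\<forall>y\<in>free_tensors m. \<forall>w\<in>free_tensors m. E (bas a) y w \<in> J"
    proof (intro ballI)
      fix y w :: "'p list \<Rightarrow>\<^sub>0 'k" assume yw: "y \<in> free_tensors m" "w \<in> free_tensors m"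
      show "E (bas a) y w \<in> J"
      proof (rule bi_induct[where E="\<lambda>y w. E (bas a) y w" and m=m and J=J])
        fix b d :: "'p list" assume "length b = m" "length d = m"
        then show "E (bas a) (bas b) (bas d) \<in> J" using base a by blast
      qed (use J L2 L3 yw in auto)
    qed
  qed (use J L1 in auto)
  then show ?thesis using y w by blast
qed

lemma coset_eqI:
  assumes "\<And>a b. a\<in>J \<Longrightarrow> b\<in>J \<Longrightarrow> a+b\<in>J" "\<And>a. a\<in>J \<Longrightarrow> - a \<in> J" "u - v \<in> J"
  shows "coset J u = coset J v"
proof -
  have "coset J u \<subseteq> coset J v" if "u - v \<in> J" for u v
  proof
    fix x assume "x \<in> coset J u"
    then obtain j where j: "j \<in> J" "x = u + j" by (auto simp: coset_def)
    have "(u - v) + j \<in> J" using j that assms(1) by blast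
    moreover have "x = v + ((u - v) + j)" using j by simp
    ultimately show "x \<in> coset J v" unfolding coset_def by blast
  qed
  moreover have "v - u \<in> J" using assms(2)[OF assms(3)] by simp
  ultimately show ?thesis using assms(3) by blast
qed

lemma rep_coset: "0 \<in> J \<Longrightarrow> \<exists>j\<in>J. rep (coset J a) = a + j"
proof -
  assume "0 \<in> J"
  then have "a \<in> coset J a" by (force simp: coset_def)
  then have "rep (coset J a) \<in> coset J a" unfolding rep_def by (rule someI)
  then show ?thesis by (auto simp: coset_def)
qed



locale pn =
  fixes smul :: "'k::field \<Rightarrow> 'p::ab_group_add \<Rightarrow> 'p"
    and mul :: "'p \<Rightarrow> 'p \<Rightarrow> 'p"
    and br :: "'p list \<Rightarrow> 'p"
    and n :: nat
    and m :: nat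
  assumes n2: "n \<ge> 2"
    and m_def: "m = n - 1"
    and PN: "poisson_nlie smul mul n br"
begin

lemma nm1 [simp]: "n - 1 = m" using m_def by simp
lemma nm2 [simp]: "n - Suc 0 = m" using m_def by simp
lemma nm3: "n = Suc m" using m_def n2 by arith
lemma m1: "m \<ge> 1" using m_def n2 by arith

abbreviation "A \<equiv> free_tensors m :: ('p list \<Rightarrow>\<^sub>0 'k) set"
abbreviation "T \<equiv> tprod mul :: ('p list \<Rightarrow>\<^sub>0 'k) \<Rightarrow> _ \<Rightarrow> _"
abbreviation "B \<equiv> tbr n br :: ('p list \<Rightarrow>\<^sub>0 'k) \<Rightarrow> _ \<Rightarrow> _"
abbreviation "Gen \<equiv> tensor_relations smul m \<union>
        {B x y + B y x | x y. x \<in> A \<and> y \<in> A}"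
abbreviation "J \<equiv> J_ideal smul mul n br :: ('p list \<Rightarrow>\<^sub>0 'k) set"

lemma mul_add: "mul (x + y) z = mul x z + mul y z"
  using PN[unfolded poisson_nlie_def nm1] by blast
lemma mul_comm: "mul x y = mul y x"
  using PN[unfolded poisson_nlie_def nm1] by blast
lemma mul_assoc: "mul (mul x y) z = mul x (mul y z)"
  using PN[unfolded poisson_nlie_def nm1] by blast
lemma skew: "length xs = n \<Longrightarrow> i < n \<Longrightarrow> j < n \<Longrightarrow> i \<noteq> j \<Longrightarrow>
        br (xs[i := xs ! j, j := xs ! i]) = - br xs"
  using PN by (simp add: poisson_nlie_def skew_list_def)
lemma FI: "length xs = m \<Longrightarrow> length ys = n \<Longrightarrow>
        br (xs @ [br ys]) = (\<Sum>i<n. br (ys[i := br (xs @ [ys ! i])]))"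
  using PN[unfolded poisson_nlie_def nm1] by blast
lemma leib: "length xs = m \<Longrightarrow>
        br (mul y z # xs) = mul y (br (z # xs)) + mul z (br (y # xs))"
  using PN[unfolded poisson_nlie_def nm1] by blast

lemma mul_zero: "mul 0 z = 0"
  using mul_add[of 0 0 z] by simp
lemma mul_neg: "mul (- a) z = - mul a z"
  using mul_add[of a "-a" z] by (simp add: mul_zero eq_neg_iff_add_eq_0 add.commute)
lemma mul_negR: "mul z (- a) = - mul z a"
  using mul_neg mul_comm by metis

lemma br_swap:
  assumes "length xs = m"
  shows "br (xs @ [t]) = - br (t # tl xs @ [hd xs])"
proof -
  obtain x xs' where xs: "xs = x # xs'" using assms m1 by (cases xs) auto
  have nn: "m = Suc (length xs')" using xs assms by simp
  let ?L = "xs @ [t]"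
  have "br (?L[0 := ?L ! (m), m := ?L ! 0]) = - br ?L"
    by (rule skew) (use assms m1 nm3 in auto)
  moreover have "?L[0 := ?L ! (m), m := ?L ! 0] = t # tl xs @ [hd xs]"
    unfolding nn by (simp add: xs nth_append list_update_append)
  ultimately show ?thesis by (metis minus_minus)
qed

lemma leib_last:
  assumes "length xs = m"
  shows "br (xs @ [mul y z]) = mul y (br (xs @ [z])) + mul z (br (xs @ [y]))"
proof -
  let ?R = "tl xs @ [hd xs]"
  have R: "length ?R = m" using assms m1 by simp
  show ?thesis
    by (simp add: br_swap[OF assms] leib[OF R] mul_negR)
qed


lemma T_bas: "T (bas a) (bas b) = bas (map2 mul a b)"
  by (simp add: tprod_def)
lemma B_bas: "B (bas a) (bas b) = (\<Sum>i<m. bas (b[i := br (a @ [b ! i])]))"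
  by (simp add: tbr_def)

lemma T_A [simp]: "x \<in> A \<Longrightarrow> y \<in> A \<Longrightarrow> T x y \<in> A"
  unfolding tprod_def by (rule ft_bilin) auto
lemma B_A [simp]: "x \<in> A \<Longrightarrow> y \<in> A \<Longrightarrow> B x y \<in> A"
  unfolding tbr_def by (rule ft_bilin) (auto intro!: ft_sum)

lemma A_ideal: "two_op_ideal A A T B"
  unfolding two_op_ideal_def by auto

lemma Gen_A: "Gen \<subseteq> A"
  unfolding tensor_relations_def by auto

lemma J_eq: "J = \<Inter>{S. two_op_ideal A S T B \<and> Gen \<subseteq> S}"
  unfolding J_ideal_def generated_ideal_def by simp
lemma J_memI: "(\<And>S. two_op_ideal A S T B \<Longrightarrow> Gen \<subseteq> S \<Longrightarrow> x \<in> S) \<Longrightarrow> x \<in> J"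
  unfolding J_eq by blast
lemma J_memD: "x \<in> J \<Longrightarrow> two_op_ideal A S T B \<Longrightarrow> Gen \<subseteq> S \<Longrightarrow> x \<in> S"
  unfolding J_eq by blast

lemma J_sub: "J \<subseteq> A"
  using J_memD A_ideal Gen_A by blast
lemma J_A: "x \<in> J \<Longrightarrow> x \<in> A"
  using J_sub by blast
lemma J_gen: "x \<in> Gen \<Longrightarrow> x \<in> J"
  by (rule J_memI) blast
lemma J_zero [simp]: "0 \<in> J"
  by (rule J_memI) (simp add: two_op_ideal_def)
lemma J_add: "x \<in> J \<Longrightarrow> y \<in> J \<Longrightarrow> x + y \<in> J"
  by (rule J_memI) (use J_memD in \<open>simp add: two_op_ideal_def\<close>)
lemma J_fsc: "x \<in> J \<Longrightarrow> fsc c x \<in> J"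
  by (rule J_memI) (use J_memD in \<open>simp add: two_op_ideal_def\<close>)
lemma J_uminus: "x \<in> J \<Longrightarrow> - x \<in> J"
  using J_fsc[of x "-1"] by (simp add: fsc_neg1)
lemma J_diff: "x \<in> J \<Longrightarrow> y \<in> J \<Longrightarrow> x - y \<in> J"
  unfolding diff_conv_add_uminus by (intro J_add J_uminus)
lemma J_sum: "(\<And>i. i \<in> S \<Longrightarrow> f i \<in> J) \<Longrightarrow> sum f S \<in> J"
  by (induction S rule: infinite_finite_induct) (auto intro: J_add)
lemma J_TL: "a \<in> A \<Longrightarrow> x \<in> J \<Longrightarrow> T a x \<in> J"
  by (rule J_memI) (use J_memD in \<open>simp add: two_op_ideal_def\<close>)
lemma J_TR: "a \<in> A \<Longrightarrow> x \<in> J \<Longrightarrow> T x a \<in> J"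
  by (rule J_memI) (use J_memD in \<open>simp add: two_op_ideal_def\<close>)
lemma J_BL: "a \<in> A \<Longrightarrow> x \<in> J \<Longrightarrow> B a x \<in> J"
  by (rule J_memI) (use J_memD in \<open>simp add: two_op_ideal_def\<close>)
lemma J_BR: "a \<in> A \<Longrightarrow> x \<in> J \<Longrightarrow> B x a \<in> J"
  by (rule J_memI) (use J_memD in \<open>simp add: two_op_ideal_def\<close>)
lemma J_skew: "x \<in> A \<Longrightarrow> y \<in> A \<Longrightarrow> B x y + B y x \<in> J"
  by (rule J_gen) blast
lemma J_rel: "length xs = m \<Longrightarrow> i < m \<Longrightarrow>
    bas (xs[i := u + v]) - bas (xs[i := u]) - bas (xs[i := v]) \<in> J"
  by (rule J_gen, rule UnI1) (unfold tensor_relations_def, blast)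

lemma J_rel_zero: "length xs = m \<Longrightarrow> i < m \<Longrightarrow> bas (xs[i := 0]) \<in> J"
  using J_uminus[OF J_rel[of xs i 0 0]] by simp

lemma J_rel_sum:
  assumes "length xs = m" "i < m" "finite S"
  shows "bas (xs[i := \<Sum>k\<in>S. g k]) - (\<Sum>k\<in>S. bas (xs[i := g k])) \<in> J"
  using assms(3)
proof (induction S rule: finite_induct)
  case empty then show ?case using J_rel_zero[OF assms(1,2)] by simp
next
  case (insert a S)
  have eq: "bas (xs[i := \<Sum>k\<in>insert a S. g k]) - (\<Sum>k\<in>insert a S. bas (xs[i := g k])) =
     (bas (xs[i := g a + (\<Sum>k\<in>S. g k)]) - bas (xs[i := g a]) - bas (xs[i := \<Sum>k\<in>S. g k]))
     + (bas (xs[i := \<Sum>k\<in>S. g k]) - (\<Sum>k\<in>S. bas (xs[i := g k])))"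
    using insert by simp
  show ?case unfolding eq by (rule J_add[OF J_rel[OF assms(1,2)] insert.IH])
qed

lemma T_addL: "T (x + y) z = T x z + T y z"
  unfolding tprod_def by (rule bilin_ext_addL)
lemma T_addR: "T z (x + y) = T z x + T z y"
  unfolding tprod_def by (rule bilin_ext_addR)
lemma T_fscL: "T (fsc c x) z = fsc c (T x z)"
  unfolding tprod_def by (rule bilin_ext_fscL)
lemma T_fscR: "T z (fsc c x) = fsc c (T z x)"
  unfolding tprod_def by (rule bilin_ext_fscR)
lemma T_diffL: "T (x - y) z = T x z - T y z"
  unfolding tprod_def by (rule bilin_ext_diffL)
lemma T_diffR: "T z (x - y) = T z x - T z y"
  unfolding tprod_def by (rule bilin_ext_diffR)
lemma T_negL: "T (- x) z = - T x z"
  unfolding tprod_def by (rule bilin_ext_negL)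
lemma T_negR: "T z (- x) = - T z x"
  unfolding tprod_def by (rule bilin_ext_negR)
lemma T_sumL: "T (sum g S) z = (\<Sum>i\<in>S. T (g i) z)"
  unfolding tprod_def by (rule bilin_ext_sumL)
lemma T_sumR: "T z (sum g S) = (\<Sum>i\<in>S. T z (g i))"
  unfolding tprod_def by (rule bilin_ext_sumR)
lemma B_addL: "B (x + y) z = B x z + B y z"
  unfolding tbr_def by (rule bilin_ext_addL)
lemma B_addR: "B z (x + y) = B z x + B z y"
  unfolding tbr_def by (rule bilin_ext_addR)
lemma B_fscL: "B (fsc c x) z = fsc c (B x z)"
  unfolding tbr_def by (rule bilin_ext_fscL)
lemma B_fscR: "B z (fsc c x) = fsc c (B z x)"
  unfolding tbr_def by (rule bilin_ext_fscR)
lemma B_diffL: "B (x - y) z = B x z - B y z"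
  unfolding tbr_def by (rule bilin_ext_diffL)
lemma B_diffR: "B z (x - y) = B z x - B z y"
  unfolding tbr_def by (rule bilin_ext_diffR)
lemma B_negL: "B (- x) z = - B x z"
  unfolding tbr_def by (rule bilin_ext_negL)
lemma B_negR: "B z (- x) = - B z x"
  unfolding tbr_def by (rule bilin_ext_negR)
lemma B_sumL: "B (sum g S) z = (\<Sum>i\<in>S. B (g i) z)"
  unfolding tbr_def by (rule bilin_ext_sumL)
lemma B_sumR: "B z (sum g S) = (\<Sum>i\<in>S. B z (g i))"
  unfolding tbr_def by (rule bilin_ext_sumR)

lemmas lin_simps = T_addL T_addR T_fscL T_fscR T_diffL T_diffR T_negL T_negR
  B_addL B_addR B_fscL B_fscR B_diffL B_diffR B_negL B_negR

lemma FI':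
  assumes "length xs = m" "length ys = m"
  shows "br (xs @ [br (ys @ [w])]) = (\<Sum>k<m. br (ys[k := br (xs @ [ys ! k])] @ [w])) + br (ys @ [br (xs @ [w])])"
proof -
  have "br (xs @ [br (ys @ [w])]) = (\<Sum>i<n. br ((ys @ [w])[i := br (xs @ [(ys @ [w]) ! i])]))"
    by (rule FI) (use assms nm3 in auto)
  also have "\<dots> = (\<Sum>i<m. br ((ys @ [w])[i := br (xs @ [(ys @ [w]) ! i])])) + br (ys @ [br (xs @ [w])])"
    unfolding nm3 using assms by (simp add: list_update_append nth_append)
  also have "(\<Sum>i<m. br ((ys @ [w])[i := br (xs @ [(ys @ [w]) ! i])])) = (\<Sum>k<m. br (ys[k := br (xs @ [ys ! k])] @ [w]))"
    by (rule sum.cong) (use assms in \<open>auto simp: list_update_append nth_append\<close>)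
  finally show ?thesis .
qed

lemma map2_updL: "length a = length b \<Longrightarrow> i < length a \<Longrightarrow> map2 f (a[i := x]) b = (map2 f a b)[i := f x (b ! i)]"
  by (rule nth_equalityI) (auto simp: nth_list_update)
lemma map2_updR: "length a = length b \<Longrightarrow> i < length a \<Longrightarrow> map2 f a (b[i := x]) = (map2 f a b)[i := f (a ! i) x]"
  by (rule nth_equalityI) (auto simp: nth_list_update)

lemma comm_base: "length a = m \<Longrightarrow> length b = m \<Longrightarrow> T (bas a) (bas b) - T (bas b) (bas a) \<in> J"
proof -
  assume "length a = m" "length b = m"
  then have "map2 mul a b = map2 mul b a" by (intro nth_equalityI) (auto simp: mul_comm)
  then show ?thesis by (simp add: T_bas)
qed

lemma assoc_base: "length a = m \<Longrightarrow> length b = m \<Longrightarrow> length d = m \<Longrightarrow>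
   T (T (bas a) (bas b)) (bas d) - T (bas a) (T (bas b) (bas d)) \<in> J"
proof -
  assume "length a = m" "length b = m" "length d = m"
  then have "map2 mul (map2 mul a b) d = map2 mul a (map2 mul b d)" by (intro nth_equalityI) (auto simp: mul_assoc)
  then show ?thesis by (simp add: T_bas)
qed

lemma leib_base:
  assumes xs: "length xs = m" and ys: "length ys = m" and ws: "length ws = m"
  shows "B (bas xs) (T (bas ys) (bas ws)) - (T (B (bas xs) (bas ys)) (bas ws) + T (bas ys) (B (bas xs) (bas ws))) \<in> J"
proof -
  define p where "p = map2 mul ys ws"
  have lp: "length p = m" using ys ws by (simp add: p_def)
  define u where "u i = mul (br (xs @ [ys ! i])) (ws ! i)" for i
  define v where "v i = mul (ys ! i) (br (xs @ [ws ! i]))" for i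
  have e1: "B (bas xs) (T (bas ys) (bas ws)) = (\<Sum>i<m. bas (p[i := u i + v i]))"
  proof -
    have "B (bas xs) (T (bas ys) (bas ws)) = (\<Sum>i<m. bas (p[i := br (xs @ [p ! i])]))"
      by (simp add: T_bas B_bas p_def)
    also have "\<dots> = (\<Sum>i<m. bas (p[i := u i + v i]))"
    proof (rule sum.cong[OF refl])
      fix i assume "i \<in> {..<m}"
      then have "p ! i = mul (ys ! i) (ws ! i)" using ys ws by (simp add: p_def)
      then show "bas (p[i := br (xs @ [p ! i])]) = bas (p[i := u i + v i])"
        by (simp add: leib_last[OF xs] u_def v_def mul_comm add.commute)
    qed
    finally show ?thesis .
  qed
  have e2: "T (B (bas xs) (bas ys)) (bas ws) = (\<Sum>i<m. bas (p[i := u i]))"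
    by (simp add: B_bas T_sumL T_bas p_def u_def map2_updL ys ws)
  have e3: "T (bas ys) (B (bas xs) (bas ws)) = (\<Sum>i<m. bas (p[i := v i]))"
    by (simp add: B_bas T_sumR T_bas p_def v_def map2_updR ys ws)
  have "B (bas xs) (T (bas ys) (bas ws)) - (T (B (bas xs) (bas ys)) (bas ws) + T (bas ys) (B (bas xs) (bas ws)))
     = (\<Sum>i<m. bas (p[i := u i + v i]) - bas (p[i := u i]) - bas (p[i := v i]))"
    unfolding e1 e2 e3 by (simp add: sum_subtractf sum.distrib algebra_simps)
  also have "\<dots> \<in> J"
    by (rule J_sum) (use J_rel lp in auto)
  finally show ?thesis .
qed


lemma jac_base:
  assumes xs: "length xs = m" and ys: "length ys = m" and ws: "length ws = m"
  shows "B (bas xs) (B (bas ys) (bas ws)) - B (B (bas xs) (bas ys)) (bas ws) - B (bas ys) (B (bas xs) (bas ws)) \<in> J"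
proof -
  define Dx where "Dx t = br (xs @ [t])" for t
  define Dy where "Dy t = br (ys @ [t])" for t
  define L where "L i j = (bas ((ws[i := Dy (ws!i)])[j := Dx ((ws[i := Dy (ws!i)]) ! j)]) :: 'p list \<Rightarrow>\<^sub>0 'k)" for i j
  define R where "R j i = (bas ((ws[j := Dx (ws!j)])[i := Dy ((ws[j := Dx (ws!j)]) ! i)]) :: 'p list \<Rightarrow>\<^sub>0 'k)" for j i
  define K where "K k i = (bas (ws[i := br (ys[k := Dx (ys!k)] @ [ws!i])]) :: 'p list \<Rightarrow>\<^sub>0 'k)" for k i
  define d where "d i = (bas (ws[i := Dx (Dy (ws!i))]) - bas (ws[i := Dy (Dx (ws!i))]) :: 'p list \<Rightarrow>\<^sub>0 'k)" for i
  have e1: "B (bas xs) (B (bas ys) (bas ws)) = (\<Sum>i<m. \<Sum>j<m. L i j)"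
    by (simp add: B_bas B_sumR L_def Dx_def Dy_def)
  have e2: "B (B (bas xs) (bas ys)) (bas ws) = (\<Sum>k<m. \<Sum>i<m. K k i)"
    by (simp add: B_bas B_sumL K_def Dx_def)
  have e3: "B (bas ys) (B (bas xs) (bas ws)) = (\<Sum>j<m. \<Sum>i<m. R j i)"
    by (simp add: B_bas B_sumR R_def Dx_def Dy_def)
  have LR: "L i j - R j i = (if j = i then d i else 0)" if "i < m" "j < m" for i j
  proof (cases "j = i")
    case True then show ?thesis using that ws by (simp add: L_def R_def d_def)
  next
    case False
    have 1: "(ws[i := Dy (ws!i)]) ! j = ws ! j" using False by simp
    have 2: "(ws[j := Dx (ws!j)]) ! i = ws ! i" using False by simp
    have 3: "ws[i := Dy (ws!i), j := Dx (ws!j)] = ws[j := Dx (ws!j), i := Dy (ws!i)]"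
      by (rule list_update_swap) (use False in simp)
    have "L i j = R j i" unfolding L_def R_def 1 2 3 ..
    then show ?thesis using False by simp
  qed
  have LRd: "(\<Sum>i<m. \<Sum>j<m. L i j) - (\<Sum>j<m. \<Sum>i<m. R j i) = (\<Sum>i<m. d i)"
  proof -
    have "(\<Sum>j<m. \<Sum>i<m. R j i) = (\<Sum>i<m. \<Sum>j<m. R j i)" by (rule sum.swap)
    then have "(\<Sum>i<m. \<Sum>j<m. L i j) - (\<Sum>j<m. \<Sum>i<m. R j i) = (\<Sum>i<m. \<Sum>j<m. L i j - R j i)"
      by (simp add: sum_subtractf)
    also have "\<dots> = (\<Sum>i<m. \<Sum>j<m. if j = i then d i else 0)"
      by (intro sum.cong refl) (simp add: LR)
    also have "\<dots> = (\<Sum>i<m. d i)"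
      by simp
    finally show ?thesis .
  qed
  have dK: "d i - (\<Sum>k<m. K k i) \<in> J" if i: "i < m" for i
  proof -
    define S where "S = (\<Sum>k<m. br (ys[k := Dx (ys!k)] @ [ws!i]))"
    have eq: "Dx (Dy (ws!i)) = S + Dy (Dx (ws!i))" using FI'[OF xs ys] by (simp add: Dx_def Dy_def S_def)
    have d: "d i = bas (ws[i := S + Dy (Dx (ws!i))]) - bas (ws[i := Dy (Dx (ws!i))])"
      unfolding d_def eq ..
    have k: "(\<Sum>k<m. K k i) = (\<Sum>k<m. bas (ws[i := br (ys[k := Dx (ys!k)] @ [ws!i])]))"
      unfolding K_def ..
    have "d i - (\<Sum>k<m. K k i) = (bas (ws[i := S + Dy (Dx (ws!i))]) - bas (ws[i := S]) - bas (ws[i := Dy (Dx (ws!i))]))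
        + (bas (ws[i := S]) - (\<Sum>k<m. bas (ws[i := br (ys[k := Dx (ys!k)] @ [ws!i])])))"
      unfolding d k by (simp add: algebra_simps)
    also have "\<dots> \<in> J"
      unfolding S_def by (intro J_add J_rel J_rel_sum) (use i ws in auto)
    finally show ?thesis .
  qed
  have "B (bas xs) (B (bas ys) (bas ws)) - B (B (bas xs) (bas ys)) (bas ws) - B (bas ys) (B (bas xs) (bas ws))
      = ((\<Sum>i<m. \<Sum>j<m. L i j) - (\<Sum>j<m. \<Sum>i<m. R j i)) - (\<Sum>k<m. \<Sum>i<m. K k i)"
    unfolding e1 e2 e3 by (rule diff_right_commute)
  also have "\<dots> = (\<Sum>i<m. d i) - (\<Sum>i<m. \<Sum>k<m. K k i)"
    unfolding LRd sum.swap[of K "{..<m}" "{..<m}"] ..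
  also have "\<dots> = (\<Sum>i<m. d i - (\<Sum>k<m. K k i))"
    by (simp add: sum_subtractf)
  also have "\<dots> \<in> J"
    by (rule J_sum) (use dK in auto)
  finally show ?thesis .
qed


lemma T_comm_J: "x \<in> A \<Longrightarrow> y \<in> A \<Longrightarrow> T x y - T y x \<in> J"
  by (rule bi_induct[where E="\<lambda>x y. T x y - T y x" and m=m and J=J])
     (auto intro: J_add J_fsc comm_base simp: lin_simps algebra_simps)

lemma T_assoc_J: "x \<in> A \<Longrightarrow> y \<in> A \<Longrightarrow> w \<in> A \<Longrightarrow> T (T x y) w - T x (T y w) \<in> J"
  by (rule tri_induct[where E="\<lambda>x y w. T (T x y) w - T x (T y w)" and m=m and J=J])
     (auto intro: J_add J_fsc assoc_base simp: lin_simps algebra_simps)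

lemma jac_der_J:
  assumes "x \<in> A" "y \<in> A" "w \<in> A"
  shows "B x (B y w) - B (B x y) w - B y (B x w) \<in> J"
proof (rule tri_induct[where E="\<lambda>x y w. B x (B y w) - B (B x y) w - B y (B x w)" and m=m and J=J])
  fix a b d :: "'p list" assume "length a = m" "length b = m" "length d = m"
  then show "B (bas a) (B (bas b) (bas d)) - B (B (bas a) (bas b)) (bas d) - B (bas b) (B (bas a) (bas d)) \<in> J"
    by (rule jac_base)
qed (use assms in \<open>auto intro: J_add J_fsc simp: lin_simps algebra_simps\<close>)

lemma leib_J:
  assumes "x \<in> A" "y \<in> A" "w \<in> A"
  shows "B x (T y w) - (T (B x y) w + T y (B x w)) \<in> J"
proof (rule tri_induct[where E="\<lambda>x y w. B x (T y w) - (T (B x y) w + T y (B x w))" and m=m and J=J])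
  fix a b d :: "'p list" assume "length a = m" "length b = m" "length d = m"
  then show "B (bas a) (T (bas b) (bas d)) - (T (B (bas a) (bas b)) (bas d) + T (bas b) (B (bas a) (bas d))) \<in> J"
    by (rule leib_base)
qed (use assms in \<open>auto intro: J_add J_fsc simp: lin_simps algebra_simps\<close>)

lemma jacobi_J:
  assumes "a \<in> A" "b \<in> A" "c \<in> A"
  shows "B a (B b c) + (B b (B c a) + B c (B a b)) \<in> J"
proof -
  have "B a (B b c) + (B b (B c a) + B c (B a b)) =
     (B a (B b c) - B (B a b) c - B b (B a c)) + (B (B a b) c + B c (B a b)) + B b (B a c + B c a)"
    by (simp add: B_addR algebra_simps)
  also have "\<dots> \<in> J"
    using assms by (intro J_add jac_der_J J_skew J_BL) auto
  finally show ?thesis .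
qed

lemma T_cong: "x \<in> A \<Longrightarrow> x' \<in> A \<Longrightarrow> y \<in> A \<Longrightarrow> y' \<in> A \<Longrightarrow> x - x' \<in> J \<Longrightarrow> y - y' \<in> J \<Longrightarrow>
    T x y - T x' y' \<in> J"
proof -
  assume h: "x \<in> A" "x' \<in> A" "y \<in> A" "y' \<in> A" "x - x' \<in> J" "y - y' \<in> J"
  have "T x y - T x' y' = T (x - x') y + T x' (y - y')" by (simp add: T_diffL T_diffR)
  then show ?thesis using J_add[OF J_TR[OF h(3,5)] J_TL[OF h(2,6)]] by simp
qed

lemma B_cong: "x \<in> A \<Longrightarrow> x' \<in> A \<Longrightarrow> y \<in> A \<Longrightarrow> y' \<in> A \<Longrightarrow> x - x' \<in> J \<Longrightarrow> y - y' \<in> J \<Longrightarrow>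
    B x y - B x' y' \<in> J"
proof -
  assume h: "x \<in> A" "x' \<in> A" "y \<in> A" "y' \<in> A" "x - x' \<in> J" "y - y' \<in> J"
  have "B x y - B x' y' = B (x - x') y + B x' (y - y')" by (simp add: B_diffL B_diffR)
  then show ?thesis using J_add[OF J_BR[OF h(3,5)] J_BL[OF h(2,6)]] by simp
qed

lemma coset_eq: "u - v \<in> J \<Longrightarrow> coset J u = coset J v"
  by (rule coset_eqI) (auto intro: J_add J_uminus)

lemma rep_J: assumes "a \<in> A" shows "rep (coset J a) - a \<in> J" "rep (coset J a) \<in> A"
proof -
  obtain j where "j \<in> J" "rep (coset J a) = a + j" using rep_coset[OF J_zero] by blast
  then show "rep (coset J a) - a \<in> J" "rep (coset J a) \<in> A" using assms J_A by auto
qed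

lemma q_add: "a \<in> A \<Longrightarrow> b \<in> A \<Longrightarrow> qop2 J (+) (coset J a) (coset J b) = coset J (a + b)"
  unfolding qop2_def
proof (rule coset_eq)
  assume "a \<in> A" "b \<in> A"
  have "rep (coset J a) + rep (coset J b) - (a + b) = (rep (coset J a) - a) + (rep (coset J b) - b)"
    by simp
  then show "rep (coset J a) + rep (coset J b) - (a + b) \<in> J"
    using J_add rep_J \<open>a \<in> A\<close> \<open>b \<in> A\<close> by metis
qed

lemma q_T: "a \<in> A \<Longrightarrow> b \<in> A \<Longrightarrow> qop2 J T (coset J a) (coset J b) = coset J (T a b)"
  unfolding qop2_def by (rule coset_eq, rule T_cong) (auto simp: rep_J)

lemma q_B: "a \<in> A \<Longrightarrow> b \<in> A \<Longrightarrow> qop2 J B (coset J a) (coset J b) = coset J (B a b)"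
  unfolding qop2_def by (rule coset_eq, rule B_cong) (auto simp: rep_J)

lemma q_neg: "a \<in> A \<Longrightarrow> qneg J (coset J a) = coset J (- a)"
  unfolding qneg_def
proof (rule coset_eq)
  assume "a \<in> A"
  have "- rep (coset J a) - - a = - (rep (coset J a) - a)" by simp
  then show "- rep (coset J a) - - a \<in> J" using J_uminus rep_J \<open>a \<in> A\<close> by metis
qed

lemma q_sc: "a \<in> A \<Longrightarrow> qsc J c (coset J a) = coset J (fsc c a)"
  unfolding qsc_def
proof (rule coset_eq)
  assume "a \<in> A"
  have "fsc c (rep (coset J a)) - fsc c a = fsc c (rep (coset J a) - a)" by simp
  then show "fsc c (rep (coset J a)) - fsc c a \<in> J" using J_fsc rep_J \<open>a \<in> A\<close> by metis
qed

lemma QI: "(\<And>a. a \<in> A \<Longrightarrow> P (coset J a)) \<Longrightarrow> \<forall>X \<in> coset J ` A. P X"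
  by blast

lemma coset_in [simp]: "u \<in> A \<Longrightarrow> coset J u \<in> coset J ` A"
  by blast

lemma quot_poisson: "poisson_algebra_on (quot A J) (coset J 0) (qop2 J (+)) (qneg J) (qsc J) (qop2 J T) (qop2 J B)"
  unfolding poisson_algebra_on_def quot_def
  apply (intro conjI QI allI)
  apply (simp_all add: q_add q_T q_B q_neg q_sc fsc_add_scalar T_addL T_fscL B_addL B_fscL)
        apply (simp add: add.assoc)
       apply (simp add: add.commute)
      apply (rule coset_eq, rule T_comm_J; assumption)
     apply (rule coset_eq, rule T_assoc_J; assumption)
    apply (rule coset_eq, simp add: J_skew)
   apply (rule coset_eq, simp add: jacobi_J)
  apply (rule coset_eq, rule leib_J; assumption)
  done

end

theorem proposition4p5:
  fixes smul :: "'k::field \<Rightarrow> 'p::ab_group_add \<Rightarrow> 'p"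
    and mul :: "'p \<Rightarrow> 'p \<Rightarrow> 'p"
    and br :: "'p list \<Rightarrow> 'p"
    and n :: nat
  assumes "n \<ge> 2"
    and "poisson_nlie smul mul n br"
  defines "A \<equiv> free_tensors (n - 1) :: ('p list \<Rightarrow>\<^sub>0 'k) set"
    and "J \<equiv> J_ideal smul mul n br"
  shows "(\<forall>x\<in>A. \<forall>x'\<in>A. \<forall>y\<in>A. \<forall>y'\<in>A. x - x' \<in> J \<longrightarrow> y - y' \<in> J \<longrightarrow>
            tprod mul x y - tprod mul x' y' \<in> J \<and> tbr n br x y - tbr n br x' y' \<in> J)
       \<and> poisson_algebra_on (quot A J) (coset J 0) (qop2 J (+)) (qneg J) (qsc J)
           (qop2 J (tprod mul)) (qop2 J (tbr n br))"
proof -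
  interpret P: pn smul mul br n "n - 1"
    using assms(1,2) by unfold_locales auto
  show ?thesis
    unfolding A_def J_def using P.T_cong P.B_cong P.quot_poisson by blast
qed

end
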